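(* Let the setting and $QW$ be as in the context, and suppose $\mathfrak{g}$ is conformal with respect to $\nabla$. Suppose there is a point $o\in\mathcal{M}$ where $|\mathfrak{a}_o|=|\mathfrak{b}_o|$ and the $\mathfrak{g}_o$-angle between $\mathfrak{a}_o$ and $\mathfrak{b}_o$ equals $2\pi/3$. Then $QW$ is right-invariant under rotations by $\pi/3$. That is, for every $p\in\mathcal{M}$, every rotation $R$ of the Euclidean plane $(T_p\mathcal{M},\mathfrak{g}_p)$ by angle $\pi/3$, and every $A\in\mathrm{Hom}(T_p\mathcal{M},\mathbb{R}^2)$, we have $QW_p(A\circ R)=QW_p(A)$.
   Context: Setting. $(\mathcal{M},\mathfrak{g})$ is a compact smooth two-dimensional Riemannian manifold which is a topological disc with smooth boundary, and $\nabla$ is a flat, symmetric (torsion-free) affine connection on $\mathcal{M}$. Let $\mathfrak{a},\mathfrak{b},\mathfrak{c}$ be $\nabla$-parallel vector fields with $\mathfrak{a}+\mathfrak{b}+\mathfrak{c}=0$, any two linearly independent at every point. Norms are taken with respect to $\mathfrak{g}$, and $\mathcal{M}$ is oriented so that $(\mathfrak{a},\mathfrak{b})$ is positive. Conformality. $\mathfrak{g}$ is conformal with respect to $\nabla$ if there is a positive function $\phi$ such that for all $\nabla$-parallel vector fields $\xi,\eta$ and all $p,q$, $\mathfrak{g}_p(\xi_p,\eta_p)/\phi^2(p)=\mathfrak{g}_q(\xi_q,\eta_q)/\phi^2(q)$. The functions $\Phi$ and $\Psi$. $\Phi:[0,\infty)\to[0,\infty)$ satisfies: - $\Phi(r)=0$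 if and only if $r=1$; - $\Phi(r)\ge\alpha_\Phi(r-1)^2$; - $\Phi(r)\le C_\Phi(1+r^2)$; - $|\Phi(r)-\Phi(s)|\le L_\Phi(1+|r|+|s|)|r-s|$ for $r,s>0$. $\Psi:\mathbb{R}\to[0,\infty)$ satisfies: - $\Psi(a)=0$ if and only if $a=1$; - $\Psi(a)>\alpha_\Psi\sqrt{|a|}$ for $a<0$; - $\Psi(a)<C_\Psi(1+|a|)$; - $|\Psi(a)-\Psi(b)|\le L_\Psi|a-b|$. All constants are positive. Energy density. Let $\nu=(\mathfrak{g}(\mathfrak{a},\mathfrak{a})\mathfrak{g}(\mathfrak{b},\mathfrak{b})-\mathfrak{g}(\mathfrak{a},\mathfrak{b})^2)^{1/2}$. For $A\in\mathrm{Hom}(T_p\mathcal{M},\mathbb{R}^2)$, let $\det A=\det[A(\mathfrak{a}_p)|A(\mathfrak{b}_p)]/\nu(p)$, with $\det[u|w]=u_1w_2-u_2w_1$. With $\rho^{\mathfrak{u}}=|\mathfrak{u}|/(|\mathfrak{a}|+|\mathfrak{b}|+|\mathfrak{c}|)$, \[ W_p(A)=\sum_{\mathfrak{u}\in\{\mathfrak{a},\mathfrak{b},\mathfrak{c}\}}\rho^{\mathfrak{u}}(p)\Phi(|A(\mathfrak{u}_p)|/|\mathfrak{u}_p|)+\Psi(\det A). \] $QW_p$ is the quasiconvex envelope of $W_p$: $QW_p(A)=\inf\{\frac{1}{|D|}\int_DW_p(A+d\varphi):\varphi\in C^\infty_c(D;\mathbb{R}^2)\}$, where $D$ is the unit disc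 in $T_p\mathcal{M}$. *)

theory Defs
  imports "HOL-Analysis.Analysis"
begin

text \<open>Since the connection is flat and torsion-free and the manifold is a disc,
  the parallel vector fields form a 2-dimensional vector space V, and parallel transport
  identifies every tangent space with V. We take V = real^2 (coordinates w.r.t. any fixed
  parallel frame). A parallel vector field is thus a constant vector u :: real^2, the
  metric is a family of inner products g p on real^2 indexed by the points p of M, and
  Hom(T_pM, R^2) is represented by 2x2 real matrices acting by mult_mat_vec.\<close>

definition det2 :: "real^2 \<Rightarrow> real^2 \<Rightarrow> real" where
  "det2 u w = u$1 * w$2 - u$2 * w$1"

definition inner_prod :: "(real^2 \<Rightarrow> real^2 \<Rightarrow> real) \<Rightarrow> bool" where
  "inner_prod h \<longleftrightarrow> bilinear h \<and> (\<forall>u v. h u v = h v u) \<and> (\<forall>u. u \<noteq> 0 \<longrightarrow> h u u > 0)"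

definition gnorm :: "(real^2 \<Rightarrow> real^2 \<Rightarrow> real) \<Rightarrow> real^2 \<Rightarrow> real" where
  "gnorm h u = sqrt (h u u)"

definition gangle :: "(real^2 \<Rightarrow> real^2 \<Rightarrow> real) \<Rightarrow> real^2 \<Rightarrow> real^2 \<Rightarrow> real" where
  "gangle h u w = arccos (h u w / (gnorm h u * gnorm h w))"

definition conformal :: "'m set \<Rightarrow> ('m \<Rightarrow> real^2 \<Rightarrow> real^2 \<Rightarrow> real) \<Rightarrow> bool" where
  "conformal M g \<longleftrightarrow> (\<exists>\<phi>::'m \<Rightarrow> real. (\<forall>p\<in>M. \<phi> p > 0) \<and>
     (\<forall>\<xi> \<eta>. \<forall>p\<in>M. \<forall>q\<in>M. g p \<xi> \<eta> / (\<phi> p)\<^sup>2 = g q \<xi> \<eta> / (\<phi> q)\<^sup>2))"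

text \<open>Energy density W_p(A); c = -a-b.\<close>
definition nu :: "(real^2 \<Rightarrow> real^2 \<Rightarrow> real) \<Rightarrow> real^2 \<Rightarrow> real^2 \<Rightarrow> real" where
  "nu h a b = sqrt (h a a * h b b - (h a b)\<^sup>2)"

definition detA :: "(real^2 \<Rightarrow> real^2 \<Rightarrow> real) \<Rightarrow> real^2 \<Rightarrow> real^2 \<Rightarrow> real^2^2 \<Rightarrow> real" where
  "detA h a b A = det2 (A *v a) (A *v b) / nu h a b"

definition rho :: "(real^2 \<Rightarrow> real^2 \<Rightarrow> real) \<Rightarrow> real^2 \<Rightarrow> real^2 \<Rightarrow> real^2 \<Rightarrow> real" where
  "rho h a b u = gnorm h u / (gnorm h a + gnorm h b + gnorm h (- a - b))"

definition Wdens :: "(real \<Rightarrow> real) \<Rightarrow> (real \<Rightarrow> real) \<Rightarrow> (real^2 \<Rightarrow> real^2 \<Rightarrow> real)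
    \<Rightarrow> real^2 \<Rightarrow> real^2 \<Rightarrow> real^2^2 \<Rightarrow> real" where
  "Wdens Phi Psi h a b A =
     (\<Sum>u\<leftarrow>[a, b, - a - b]. rho h a b u * Phi (norm (A *v u) / gnorm h u)) + Psi (detA h a b A)"

fun Ck :: "nat \<Rightarrow> (real^2 \<Rightarrow> real^2) \<Rightarrow> bool" where
  "Ck 0 f = continuous_on UNIV f"
| "Ck (Suc k) f = (f differentiable_on UNIV \<and> (\<forall>v. Ck k (\<lambda>x. frechet_derivative f (at x) v)))"

definition smooth :: "(real^2 \<Rightarrow> real^2) \<Rightarrow> bool" where
  "smooth f \<longleftrightarrow> (\<forall>k. Ck k f)"

definition gdisc :: "(real^2 \<Rightarrow> real^2 \<Rightarrow> real) \<Rightarrow> (real^2) set" where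
  "gdisc h = {v. h v v < 1}"

definition test_maps :: "(real^2) set \<Rightarrow> (real^2 \<Rightarrow> real^2) set" where
  "test_maps D = {\<phi>. smooth \<phi> \<and> compact (closure {x. \<phi> x \<noteq> 0}) \<and> closure {x. \<phi> x \<noteq> 0} \<subseteq> D}"

definition dmat :: "(real^2 \<Rightarrow> real^2) \<Rightarrow> real^2 \<Rightarrow> real^2^2" where
  "dmat \<phi> x = matrix (frechet_derivative \<phi> (at x))"

text \<open>Quasiconvex envelope QW_p(A) (values in [0,\<infinity>]; W \<ge> 0 so the
  nonnegative integral is used; |D| is the Lebesgue measure of D in coordinates,
  the average being independent of the chosen Lebesgue normalisation).\<close>
definition QW :: "(real \<Rightarrow> real) \<Rightarrow> (real \<Rightarrow> real) \<Rightarrow> (real^2 \<Rightarrow> real^2 \<Rightarrow> real)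
    \<Rightarrow> real^2 \<Rightarrow> real^2 \<Rightarrow> real^2^2 \<Rightarrow> ennreal" where
  "QW Phi Psi h a b A =
     (INF \<phi>\<in>test_maps (gdisc h).
        (\<integral>\<^sup>+ x. indicator (gdisc h) x * ennreal (Wdens Phi Psi h a b (A + dmat \<phi> x)) \<partial>lborel)
        / emeasure lborel (gdisc h))"

text \<open>R is a rotation of the oriented Euclidean plane (real^2, h) by angle \<theta>, the
  orientation being the one in which (a,b) is positive.\<close>
definition is_rotation :: "(real^2 \<Rightarrow> real^2 \<Rightarrow> real) \<Rightarrow> real^2 \<Rightarrow> real^2 \<Rightarrow> real \<Rightarrow> real^2^2 \<Rightarrow> bool" where
  "is_rotation h a b \<theta> R \<longleftrightarrow>
     (\<forall>u w. h (R *v u) (R *v w) = h u w) \<and>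
     (\<forall>u. h u (R *v u) = cos \<theta> * h u u) \<and>
     (\<forall>u. u \<noteq> 0 \<longrightarrow> sgn (det2 u (R *v u)) = sgn (sin \<theta>) * sgn (det2 a b))"

end

theory Submission
  imports Defs
begin
lemma distr_lin:
  fixes T S :: "real^2^2"
  assumes dT: "\<bar>det T\<bar> = 1" and TS: "T ** S = mat 1" and ST: "S ** T = mat 1"
  shows "distr lborel borel (\<lambda>x. T *v x) = lborel"
proof (rule lborel_eqI[symmetric])
  show "sets (distr lborel borel (\<lambda>x. T *v x)) = sets borel" by simp
  have mT: "(\<lambda>x. T *v x) \<in> borel_measurable borel"
    by (intro borel_measurable_continuous_onI linear_continuous_on matrix_vector_mul_bounded_linear)
  fix l u :: "real^2" assume lu: "\<And>b. b \<in> Basis \<Longrightarrow> l \<bullet> b \<le> u \<bullet> b"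
  have pre: "(\<lambda>x. T *v x) -` box l u = (\<lambda>x. S *v x) ` box l u"
  proof -
    have "\<And>x. S *v (T *v x) = x" "\<And>x. T *v (S *v x) = x" using TS ST
      by (simp_all add: matrix_vector_mul_assoc)
    then show ?thesis by (auto intro!: image_eqI)
  qed
  have dS: "\<bar>det S\<bar> = 1" using dT TS
  proof -
    have "det T * det S = 1" using TS by (metis det_mul det_I)
    then have "\<bar>det T\<bar> * \<bar>det S\<bar> = 1" by (metis abs_mult abs_1)
    then show ?thesis using dT by simp
  qed
  have bl: "box l u \<in> lmeasurable" by simp
  have m1: "(\<lambda>x. S *v x) ` box l u \<in> lmeasurable"
    by (rule measurable_linear_image[OF _ bl]) (simp add: matrix_vector_mul_linear)
  have m2: "measure lebesgue ((\<lambda>x. S *v x) ` box l u) = measure lebesgue (box l u)"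
    using measure_linear_image[OF _ bl, of "\<lambda>x. S *v x"] dS by (simp add: matrix_vector_mul_linear)
  have bor: "(\<lambda>x. T *v x) -` box l u \<in> sets borel"
    using mT by (simp add: measurable_sets_borel)
  have "emeasure (distr lborel borel (\<lambda>x. T *v x)) (box l u) = emeasure lborel ((\<lambda>x. T *v x) -` box l u)"
    using mT by (simp add: emeasure_distr)
  also have "\<dots> = emeasure lebesgue ((\<lambda>x. T *v x) -` box l u)"
    using bor by simp
  also have "\<dots> = emeasure lebesgue (box l u)"
    using m1 m2 bl pre by (simp add: emeasure_eq_measure2)
  also have "\<dots> = emeasure lborel (box l u)" by simp
  also have "\<dots> = (\<Prod>b\<in>Basis. (u - l) \<bullet> b)" using lu by simp
  finally show "emeasure (distr lborel borel (\<lambda>x. T *v x)) (box l u) = (\<Prod>b\<in>Basis. (u - l) \<bullet> b)" .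
qed

lemma nn_integral_bij_inv:
  fixes T Ti :: "'a::euclidean_space \<Rightarrow> 'a"
  assumes mT: "T \<in> borel_measurable borel" and mTi: "Ti \<in> borel_measurable borel"
    and inv1: "\<And>x. T (Ti x) = x" and inv2: "\<And>x. Ti (T x) = x"
    and D: "distr lborel borel T = lborel"
  shows "(\<integral>\<^sup>+ x. f (T x) \<partial>lborel) = (\<integral>\<^sup>+ x. f x \<partial>lborel)"
proof -
  have simpT: "simple_function lborel (g \<circ> T)" if "simple_function lborel g" for g :: "'a \<Rightarrow> ennreal"
  proof (rule simple_function_borel_measurable)
    have "g \<in> borel_measurable lborel" using that by (rule borel_measurable_simple_function)
    then show "g \<circ> T \<in> borel_measurable lborel" using mT by (simp add: measurable_comp)
    have "finite (g ` space lborel)" using that by (simp add: simple_function_def)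
    moreover have "(g \<circ> T) ` space lborel \<subseteq> g ` space lborel" by auto
    ultimately show "finite ((g \<circ> T) ` space lborel)" by (rule finite_subset[rotated])
  qed
  have simpTi: "simple_function lborel (g \<circ> Ti)" if "simple_function lborel g" for g :: "'a \<Rightarrow> ennreal"
  proof (rule simple_function_borel_measurable)
    have "g \<in> borel_measurable lborel" using that by (rule borel_measurable_simple_function)
    then show "g \<circ> Ti \<in> borel_measurable lborel" using mTi by (simp add: measurable_comp)
    have "finite (g ` space lborel)" using that by (simp add: simple_function_def)
    moreover have "(g \<circ> Ti) ` space lborel \<subseteq> g ` space lborel" by auto
    ultimately show "finite ((g \<circ> Ti) ` space lborel)" by (rule finite_subset[rotated])
  qed
  have intT: "integral\<^sup>S lborel (g \<circ> T) = integral\<^sup>S lborel g" if "simple_function lborel g" for g :: "'a \<Rightarrow> ennreal"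
  proof -
    have gm: "g \<in> borel_measurable borel" using borel_measurable_simple_function[OF that] by simp
    have "integral\<^sup>S lborel (g \<circ> T) = integral\<^sup>N lborel (g \<circ> T)"
      using simpT[OF that] by (simp add: nn_integral_eq_simple_integral)
    also have "\<dots> = integral\<^sup>N (distr lborel borel T) g"
      using mT gm by (simp add: nn_integral_distr comp_def)
    also have "\<dots> = integral\<^sup>S lborel g" using D that by (simp add: nn_integral_eq_simple_integral)
    finally show ?thesis .
  qed
  have eqset: "{g. simple_function lborel g \<and> g \<le> (\<lambda>x. f (T x))} =
      (\<lambda>g. g \<circ> T) ` {g. simple_function lborel g \<and> g \<le> f}"
  proof (intro equalityI subsetI)
    fix h assume "h \<in> {g. simple_function lborel g \<and> g \<le> (\<lambda>x. f (T x))}"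
    then have h: "simple_function lborel h" "h \<le> (\<lambda>x. f (T x))" by auto
    have "h = (h \<circ> Ti) \<circ> T" by (simp add: comp_def inv2)
    moreover have "h \<circ> Ti \<in> {g. simple_function lborel g \<and> g \<le> f}"
      using simpTi[OF h(1)] h(2) by (auto simp: le_fun_def inv1 dest: spec[of _ "Ti _"])
    ultimately show "h \<in> (\<lambda>g. g \<circ> T) ` {g. simple_function lborel g \<and> g \<le> f}" by blast
  next
    fix h assume "h \<in> (\<lambda>g. g \<circ> T) ` {g. simple_function lborel g \<and> g \<le> f}"
    then obtain g where "h = g \<circ> T" "simple_function lborel g" "g \<le> f" by auto
    then show "h \<in> {g. simple_function lborel g \<and> g \<le> (\<lambda>x. f (T x))}"
      using simpT by (auto simp: le_fun_def)
  qed
  show ?thesis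
    unfolding nn_integral_def eqset image_image
    using intT by (intro SUP_cong) auto
qed

lemma fd_comp_lin:
  fixes f :: "real^2 \<Rightarrow> real^2" and T :: "real^2^2"
  assumes "f differentiable at (T *v x)"
  shows "frechet_derivative (\<lambda>y. f (T *v y)) (at x) = (\<lambda>v. frechet_derivative f (at (T *v x)) (T *v v))"
proof -
  have d1: "((\<lambda>y. T *v y) has_derivative (\<lambda>v. T *v v)) (at x)"
    by (simp add: bounded_linear_imp_has_derivative matrix_vector_mul_bounded_linear)
  have d2: "(f has_derivative frechet_derivative f (at (T *v x))) (at (T *v x))"
    using assms by (simp add: frechet_derivative_works)
  have "((f \<circ> (\<lambda>y. T *v y)) has_derivative (frechet_derivative f (at (T *v x)) \<circ> (\<lambda>v. T *v v))) (at x)"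
    by (rule diff_chain_at[OF d1 d2])
  then have "((\<lambda>y. f (T *v y)) has_derivative (\<lambda>v. frechet_derivative f (at (T *v x)) (T *v v))) (at x)"
    by (simp add: comp_def)
  then show ?thesis by (rule frechet_derivative_at[symmetric])
qed

lemma Ck_comp_lin:
  fixes T :: "real^2^2"
  shows "Ck k f \<Longrightarrow> Ck k (\<lambda>y. f (T *v y))"
proof (induction k arbitrary: f)
  case 0
  have "continuous_on UNIV (\<lambda>y. T *v y)" by (intro linear_continuous_on matrix_vector_mul_bounded_linear)
  then show ?case using 0 by (simp add: continuous_on_compose2[where g=f and t=UNIV])
next
  case (Suc k)
  have df: "f differentiable_on UNIV" and IHf: "\<forall>v. Ck k (\<lambda>x. frechet_derivative f (at x) v)"
    using Suc.prems by auto
  have dfa: "f differentiable at z" for z using df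
    by (simp add: differentiable_on_eq_differentiable_at)
  have "(\<lambda>y. f (T *v y)) differentiable at x" for x
  proof -
    have "((\<lambda>y. f (T *v y)) has_derivative (\<lambda>v. frechet_derivative f (at (T *v x)) (T *v v))) (at x)"
    proof -
      have d1: "((\<lambda>y. T *v y) has_derivative (\<lambda>v. T *v v)) (at x)"
        by (simp add: bounded_linear_imp_has_derivative matrix_vector_mul_bounded_linear)
      have d2: "(f has_derivative frechet_derivative f (at (T *v x))) (at (T *v x))"
        using dfa by (simp add: frechet_derivative_works)
      show ?thesis using diff_chain_at[OF d1 d2] by (simp add: comp_def)
    qed
    then show ?thesis by (auto simp: differentiable_def)
  qed
  then have "(\<lambda>y. f (T *v y)) differentiable_on UNIV"
    by (simp add: differentiable_on_eq_differentiable_at)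
  moreover have "Ck k (\<lambda>x. frechet_derivative (\<lambda>y. f (T *v y)) (at x) v)" for v
  proof -
    have "Ck k (\<lambda>x. frechet_derivative f (at (T *v x)) (T *v v))"
      using Suc.IH[of "\<lambda>z. frechet_derivative f (at z) (T *v v)"] IHf by blast
    then show ?thesis using fd_comp_lin[OF dfa] by simp
  qed
  ultimately show ?case by simp
qed

lemma dmat_comp_lin:
  fixes f :: "real^2 \<Rightarrow> real^2" and T :: "real^2^2"
  assumes "f differentiable at (T *v x)"
  shows "dmat (\<lambda>y. f (T *v y)) x = dmat f (T *v x) ** T"
proof -
  have lin: "linear (frechet_derivative f (at (T *v x)))"
    using assms by (simp add: frechet_derivative_works has_derivative_linear)
  have "dmat (\<lambda>y. f (T *v y)) x = matrix (frechet_derivative f (at (T *v x)) \<circ> (\<lambda>v. T *v v))"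
    unfolding dmat_def fd_comp_lin[OF assms] by (simp add: comp_def)
  also have "\<dots> = matrix (frechet_derivative f (at (T *v x))) ** matrix (\<lambda>v. T *v v)"
    by (rule matrix_compose[OF _ lin]) (simp add: matrix_vector_mul_linear)
  finally show ?thesis by (simp add: dmat_def)
qed
lemma test_maps_comp:
  fixes T S :: "real^2^2" and h :: "real^2 \<Rightarrow> real^2 \<Rightarrow> real"
  assumes TS: "T ** S = mat 1" and ST: "S ** T = mat 1"
    and hT: "\<And>x. h (T *v x) (T *v x) = h x x"
    and phi: "\<phi> \<in> test_maps (gdisc h)"
  shows "(\<lambda>y. \<phi> (T *v y)) \<in> test_maps (gdisc h)"
proof -
  have i1: "\<And>x. S *v (T *v x) = x" and i2: "\<And>x. T *v (S *v x) = x" using TS ST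
    by (simp_all add: matrix_vector_mul_assoc)
  have sm: "smooth \<phi>" and cp: "compact (closure {x. \<phi> x \<noteq> 0})"
    and sub: "closure {x. \<phi> x \<noteq> 0} \<subseteq> gdisc h"
    using phi by (auto simp: test_maps_def)
  have "smooth (\<lambda>y. \<phi> (T *v y))" using sm Ck_comp_lin by (auto simp: smooth_def)
  have eq: "{x. \<phi> (T *v x) \<noteq> 0} = (\<lambda>x. S *v x) ` {y. \<phi> y \<noteq> 0}"
    using i1 i2 by (auto intro!: image_eqI)
  have inj: "inj (\<lambda>x. S *v x)" by (metis i2 injI)
  have cl: "closure {x. \<phi> (T *v x) \<noteq> 0} = (\<lambda>x. S *v x) ` closure {y. \<phi> y \<noteq> 0}"
    unfolding eq by (rule closure_injective_linear_image[symmetric, OF _ inj]) (simp add: matrix_vector_mul_linear)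
  have "compact (closure {x. \<phi> (T *v x) \<noteq> 0})"
    unfolding cl by (intro compact_continuous_image cp linear_continuous_on matrix_vector_mul_bounded_linear)
  moreover have "closure {x. \<phi> (T *v x) \<noteq> 0} \<subseteq> gdisc h"
  proof
    fix z assume "z \<in> closure {x. \<phi> (T *v x) \<noteq> 0}"
    then obtain y where y: "y \<in> closure {y. \<phi> y \<noteq> 0}" "z = S *v y" unfolding cl by auto
    then have "h y y < 1" using sub by (auto simp: gdisc_def)
    then show "z \<in> gdisc h" using hT[of "S *v y"] y i2 by (simp add: gdisc_def)
  qed
  ultimately show ?thesis using \<open>smooth (\<lambda>y. \<phi> (T *v y))\<close> by (simp add: test_maps_def)
qed

lemma QW_le:
  fixes T B :: "real^2^2" and h :: "real^2 \<Rightarrow> real^2 \<Rightarrow> real"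
  assumes dT: "det T = 1"
    and hT: "\<And>x. h (T *v x) (T *v x) = h x x"
    and WT: "\<And>M. Wdens Phi Psi h a b (M ** T) = Wdens Phi Psi h a b M"
  shows "QW Phi Psi h a b (B ** T) \<le> QW Phi Psi h a b B"
proof -
  obtain S where TS: "T ** S = mat 1" and ST: "S ** T = mat 1"
    using dT invertible_det_nz[of T] by (auto simp: invertible_def)
  have i1: "\<And>x. S *v (T *v x) = x" and i2: "\<And>x. T *v (S *v x) = x" using TS ST
    by (simp_all add: matrix_vector_mul_assoc)
  define D where "D = gdisc h"
  show ?thesis unfolding QW_def D_def[symmetric]
  proof (rule INF_mono)
    fix \<phi> assume phi: "\<phi> \<in> test_maps D"
    let ?\<psi> = "\<lambda>y. \<phi> (T *v y)"
    have psi: "?\<psi> \<in> test_maps D" using test_maps_comp[of T S h, OF TS ST hT] phi by (simp add: D_def)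
    have "smooth \<phi>" using phi by (simp add: test_maps_def)
    then have "Ck 1 \<phi>" by (simp add: smooth_def)
    then have dphi: "\<phi> differentiable at z" for z
      by (simp add: differentiable_on_eq_differentiable_at)
    have ptw: "indicator D x * ennreal (Wdens Phi Psi h a b (B ** T + dmat ?\<psi> x)) =
       (\<lambda>y. indicator D y * ennreal (Wdens Phi Psi h a b (B + dmat \<phi> y))) (T *v x)" for x
    proof -
      have "indicator D x = (indicator D (T *v x) :: ennreal)"
        using hT[of x] by (simp add: D_def gdisc_def indicator_def)
      moreover have "B ** T + dmat ?\<psi> x = (B + dmat \<phi> (T *v x)) ** T"
        unfolding dmat_comp_lin[OF dphi]
        by (simp add: matrix_matrix_mult_def vec_eq_iff sum.distrib algebra_simps)
      ultimately show ?thesis using WT by simp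
    qed
    have "(\<integral>\<^sup>+ x. indicator D x * ennreal (Wdens Phi Psi h a b (B ** T + dmat ?\<psi> x)) \<partial>lborel)
        = (\<integral>\<^sup>+ x. indicator D x * ennreal (Wdens Phi Psi h a b (B + dmat \<phi> x)) \<partial>lborel)"
      unfolding ptw
    proof (rule nn_integral_bij_inv)
      show "(\<lambda>x. T *v x) \<in> borel_measurable borel" "(\<lambda>x. S *v x) \<in> borel_measurable borel"
        by (intro borel_measurable_continuous_onI linear_continuous_on matrix_vector_mul_bounded_linear)+
      show "distr lborel borel (\<lambda>x. T *v x) = lborel"
        using distr_lin[OF _ TS ST] dT by simp
    qed (use i1 i2 in auto)
    then show "\<exists>n\<in>test_maps D. (\<integral>\<^sup>+ x. indicator D x * ennreal (Wdens Phi Psi h a b (B ** T + dmat n x)) \<partial>lborel) / emeasure lborel D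
       \<le> (\<integral>\<^sup>+ x. indicator D x * ennreal (Wdens Phi Psi h a b (B + dmat \<phi> x)) \<partial>lborel) / emeasure lborel D"
      using psi by (intro bexI[of _ ?\<psi>]) auto
  qed
qed
lemma ip_expand:
  assumes "inner_prod h"
  shows "h (x *\<^sub>R u + y *\<^sub>R e) w = x * h u w + y * h e w"
    "h w (x *\<^sub>R u + y *\<^sub>R e) = x * h w u + y * h w e"
proof -
  have b: "bilinear h" using assms unfolding inner_prod_def by blast
  show "h (x *\<^sub>R u + y *\<^sub>R e) w = x * h u w + y * h e w"
    "h w (x *\<^sub>R u + y *\<^sub>R e) = x * h w u + y * h w e"
    by (simp_all add: b bilinear_ladd bilinear_radd bilinear_lmul bilinear_rmul)
qed

lemma basis2:
  fixes u e v :: "real^2"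
  assumes "det2 u e \<noteq> 0"
  shows "v = (det2 v e / det2 u e) *\<^sub>R u + (det2 u v / det2 u e) *\<^sub>R e"
proof -
  have "det2 u e *\<^sub>R v = det2 v e *\<^sub>R u + det2 u v *\<^sub>R e"
    by (simp add: vec_eq_iff forall_2 det2_def algebra_simps)
  then have "(1 / det2 u e) *\<^sub>R (det2 u e *\<^sub>R v) = (1 / det2 u e) *\<^sub>R (det2 v e *\<^sub>R u + det2 u v *\<^sub>R e)"
    by simp
  then show ?thesis using assms by (simp add: scaleR_add_right)
qed

lemma rot_vec:
  fixes u e v :: "real^2"
  assumes ip: "inner_prod h" and uu: "h u u = N" and N: "N > 0" and ue: "h u e = - N / 2"
    and ee: "h e e = N" and d: "det2 u e \<noteq> 0" and vv: "h v v = N" and uv: "h u v = N / 2"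
    and sg: "sgn (det2 u v) = sgn (det2 u e)"
  shows "v = u + e"
proof -
  define x where "x = det2 v e / det2 u e"
  define y where "y = det2 u v / det2 u e"
  have v: "v = x *\<^sub>R u + y *\<^sub>R e" unfolding x_def y_def by (rule basis2[OF d])
  have sym: "h e u = h u e" using ip unfolding inner_prod_def by blast
  have "h u v = x * h u u + y * h u e" unfolding v by (rule ip_expand(2)[OF ip])
  then have e1: "x * N - y * N / 2 = N / 2" using uv uu ue by simp
  have "h v v = x * (x * h u u + y * h e u) + y * (x * h u e + y * h e e)"
    unfolding v ip_expand(1)[OF ip] ip_expand(2)[OF ip] by simp
  then have e2: "x * (x * N - y * N / 2) + y * (x * (- N / 2) + y * N) = N" using vv uu ue ee sym by simp
  have "(x - y / 2 - 1 / 2) * N = 0" using e1 by (simp add: algebra_simps)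
  then have e1': "x = (1 + y) / 2" using N by simp
  have "(x * x - x * y + y * y - 1) * N = 0" using e2 by (simp add: algebra_simps)
  then have e2': "x * x - x * y + y * y = 1" using N by simp
  have "det2 u v = y * det2 u e" using d by (simp add: y_def)
  then have "y > 0" using sg d by (metis mult_cancel_right2 sgn_1_pos sgn_mult sgn_zero_iff)
  have "(y - 1) * (y + 1) = 0" using e2' e1' by algebra
  then have "y = 1" using \<open>y > 0\<close> by simp
  then have "x = 1" using e1' by simp
  show ?thesis using v \<open>x = 1\<close> \<open>y = 1\<close> by simp
qed
lemma ip_sym: "inner_prod h \<Longrightarrow> h u w = h w u"
  unfolding inner_prod_def by blast

lemma ip_nonneg:
  assumes "inner_prod h" shows "h w w \<ge> 0"
proof (cases "w = 0")
  case True
  have b: "bilinear h" using assms unfolding inner_prod_def by blast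
  then show ?thesis using True by (simp add: bilinear_lzero)
next
  case False
  then show ?thesis using assms unfolding inner_prod_def by (simp add: less_imp_le)
qed

lemma ip_sum_sq:
  assumes ip: "inner_prod h"
  shows "h (u + e) (u + e) = h u u + 2 * h u e + h e e"
    "h (u - e) (u - e) = h u u - 2 * h u e + h e e"
    "h (- u - e) (- u - e) = h u u + 2 * h u e + h e e"
proof -
  have s: "h e u = h u e" using ip_sym[OF ip] .
  have "h (1 *\<^sub>R u + 1 *\<^sub>R e) (1 *\<^sub>R u + 1 *\<^sub>R e) = h u u + 2 * h u e + h e e"
    unfolding ip_expand[OF ip] using s by simp
  then show "h (u + e) (u + e) = h u u + 2 * h u e + h e e" by simp
  have "h (1 *\<^sub>R u + (-1) *\<^sub>R e) (1 *\<^sub>R u + (-1) *\<^sub>R e) = h u u - 2 * h u e + h e e"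
    unfolding ip_expand[OF ip] using s by simp
  then show "h (u - e) (u - e) = h u u - 2 * h u e + h e e" by simp
  have "h ((-1) *\<^sub>R u + (-1) *\<^sub>R e) ((-1) *\<^sub>R u + (-1) *\<^sub>R e) = h u u + 2 * h u e + h e e"
    unfolding ip_expand[OF ip] using s by simp
  then show "h (- u - e) (- u - e) = h u u + 2 * h u e + h e e" by simp
qed

lemma cos_2pi3: "cos (2 * pi / 3) = - 1 / 2"
proof -
  have "cos (2 * pi / 3) = cos (pi - pi / 3)" by (rule arg_cong[where f=cos]) simp
  also have "\<dots> = - cos (pi / 3)" by (rule cos_pi_minus)
  finally show ?thesis by (simp add: cos_60)
qed

lemma geom_o:
  assumes ip: "inner_prod h" and a0: "a \<noteq> 0"
    and len: "gnorm h a = gnorm h b" and ang: "gangle h a b = 2 * pi / 3"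
  shows "h b b = h a a" "h a b = - h a a / 2" "h a a > 0"
proof -
  show pos: "h a a > 0" using ip a0 unfolding inner_prod_def by blast
  show bb: "h b b = h a a" using len ip_nonneg[OF ip, of a] ip_nonneg[OF ip, of b]
    by (simp add: gnorm_def)
  have sq: "gnorm h a * gnorm h b = h a a" using bb pos
    by (simp add: gnorm_def)
  have "h (a + b) (a + b) \<ge> 0" "h (a - b) (a - b) \<ge> 0" using ip_nonneg[OF ip] by auto
  then have bnd: "- h a a \<le> h a b" "h a b \<le> h a a" unfolding ip_sum_sq[OF ip] bb by auto
  have "arccos (h a b / h a a) = 2 * pi / 3" using ang sq by (simp add: gangle_def)
  then have "cos (arccos (h a b / h a a)) = - 1 / 2" using cos_2pi3 by (simp only:)
  moreover have "- 1 \<le> h a b / h a a" "h a b / h a a \<le> 1" using bnd pos by (auto simp: field_simps)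
  ultimately have "h a b / h a a = - 1 / 2" by simp
  then show "h a b = - h a a / 2" using pos by (simp add: field_simps)
qed

lemma detR1:
  fixes R :: "real^2^2"
  assumes d: "det2 a b \<noteq> 0" and Ra: "R *v a = a + b" and Rb: "R *v b = - a"
  shows "det R = 1"
proof -
  have "det2 (R *v a) (R *v b) = det R * det2 a b"
    by (simp add: det_2 det2_def matrix_vector_mult_def sum_2 algebra_simps)
  moreover have "det2 (a + b) (- a) = det2 a b" by (simp add: det2_def algebra_simps)
  ultimately have "det R * det2 a b = 1 * det2 a b" using Ra Rb by simp
  then show ?thesis using d by (metis mult_cancel_right)
qed

lemma W_inv:
  fixes R Mx :: "real^2^2"
  assumes ip: "inner_prod h" and aa: "h a a = N" and bb: "h b b = N" and ab: "h a b = - N / 2"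
    and Ra: "R *v a = a + b" and Rb: "R *v b = - a"
  shows "Wdens Phi Psi h a b (Mx ** R) = Wdens Phi Psi h a b Mx"
proof -
  have cc: "h (- a - b) (- a - b) = N" using ip_sum_sq(3)[OF ip, of a b] aa bb ab by simp
  have Rc: "R *v (- a - b) = - b"
  proof -
    have "R *v (- a - b) = - (R *v a) - R *v b"
      by (simp add: vec_eq_iff matrix_vector_mult_def sum_2 algebra_simps)
    then show ?thesis using Ra Rb by simp
  qed
  have ga: "gnorm h a = sqrt N" and gb: "gnorm h b = sqrt N" and gc: "gnorm h (- a - b) = sqrt N"
    using aa bb cc by (simp_all add: gnorm_def)
  define r where "r = sqrt N / (sqrt N + sqrt N + sqrt N)"
  have ra: "rho h a b a = r" "rho h a b b = r" "rho h a b (- a - b) = r"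
    using ga gb gc by (simp_all add: rho_def r_def)
  define P where "P = Mx *v a"
  define Q where "Q = Mx *v b"
  have m: "(Mx ** R) *v v = Mx *v (R *v v)" for v by (simp add: matrix_vector_mul_assoc)
  have l1: "Mx *v (a + b) = P + Q" "Mx *v (- a) = - P" "Mx *v (- b) = - Q" "Mx *v (- a - b) = - P - Q"
    by (simp_all add: P_def Q_def vec_eq_iff matrix_vector_mult_def sum_2 algebra_simps)
  have n1: "norm (- P - Q) = norm (P + Q)"
  proof -
    have "- P - Q = - (P + Q)" by simp
    then show ?thesis by (simp only: norm_minus_cancel)
  qed
  have d1: "det2 (P + Q) (- P) = det2 P Q" by (simp add: det2_def algebra_simps)
  show ?thesis
    unfolding Wdens_def detA_def
    by (simp add: m Ra Rb Rc l1 ra ga gb gc n1 d1 P_def[symmetric] Q_def[symmetric])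
qed
theorem proposition5p6:
  fixes M :: "'m set" and g :: "'m \<Rightarrow> real^2 \<Rightarrow> real^2 \<Rightarrow> real"
    and a b :: "real^2" and o0 :: 'm
    and Phi Psi :: "real \<Rightarrow> real"
    and alpha_Phi C_Phi L_Phi alpha_Psi C_Psi L_Psi :: real
  assumes g_inner: "\<forall>p\<in>M. inner_prod (g p)"
    and indep: "det2 a b \<noteq> 0"
    and Phi_nonneg: "\<forall>r\<ge>0. Phi r \<ge> 0"
    and Phi_zero: "\<forall>r\<ge>0. Phi r = 0 \<longleftrightarrow> r = 1"
    and Phi_lower: "alpha_Phi > 0" "\<forall>r\<ge>0. Phi r \<ge> alpha_Phi * (r - 1)\<^sup>2"
    and Phi_upper: "C_Phi > 0" "\<forall>r\<ge>0. Phi r \<le> C_Phi * (1 + r\<^sup>2)"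
    and Phi_lip: "L_Phi > 0"
      "\<forall>r s. r > 0 \<longrightarrow> s > 0 \<longrightarrow> \<bar>Phi r - Phi s\<bar> \<le> L_Phi * (1 + \<bar>r\<bar> + \<bar>s\<bar>) * \<bar>r - s\<bar>"
    and Psi_nonneg: "\<forall>x. Psi x \<ge> 0"
    and Psi_zero: "\<forall>x. Psi x = 0 \<longleftrightarrow> x = 1"
    and Psi_lower: "alpha_Psi > 0" "\<forall>x<0. Psi x > alpha_Psi * sqrt \<bar>x\<bar>"
    and Psi_upper: "C_Psi > 0" "\<forall>x. Psi x < C_Psi * (1 + \<bar>x\<bar>)"
    and Psi_lip: "L_Psi > 0" "\<forall>x y. \<bar>Psi x - Psi y\<bar> \<le> L_Psi * \<bar>x - y\<bar>"
    and conf: "conformal M g"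
    and o_in: "o0 \<in> M"
    and o_len: "gnorm (g o0) a = gnorm (g o0) b"
    and o_ang: "gangle (g o0) a b = 2 * pi / 3"
  shows "\<forall>p\<in>M. \<forall>R A. is_rotation (g p) a b (pi / 3) R \<longrightarrow>
           QW Phi Psi (g p) a b (A ** R) = QW Phi Psi (g p) a b A"
proof (intro ballI allI impI)
  fix p R A
  assume pM: "p \<in> M" and rot: "is_rotation (g p) a b (pi / 3) R"
  define h where "h = g p"
  have ip: "inner_prod h" using g_inner pM by (simp add: h_def)
  have ipo: "inner_prod (g o0)" using g_inner o_in by simp
  have a0: "a \<noteq> 0" using indep by (auto simp: det2_def)
  obtain \<phi> :: "'m \<Rightarrow> real" where phipos: "\<forall>p\<in>M. \<phi> p > 0"
    and phieq: "\<forall>\<xi> \<eta>. \<forall>p\<in>M. \<forall>q\<in>M. g p \<xi> \<eta> / (\<phi> p)\<^sup>2 = g q \<xi> \<eta> / (\<phi> q)\<^sup>2"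
    using conf unfolding conformal_def by blast
  define c where "c = (\<phi> p)\<^sup>2 / (\<phi> o0)\<^sup>2"
  have pp: "\<phi> p > 0" and po: "\<phi> o0 > 0" using phipos pM o_in by auto
  have hc: "h \<xi> \<eta> = c * g o0 \<xi> \<eta>" for \<xi> \<eta>
  proof -
    have "g p \<xi> \<eta> / (\<phi> p)\<^sup>2 = g o0 \<xi> \<eta> / (\<phi> o0)\<^sup>2" using phieq pM o_in by blast
    then show ?thesis using pp po by (simp add: h_def c_def field_simps)
  qed
  have cpos: "c > 0" using pp po by (simp add: c_def)
  note go = geom_o[OF ipo a0 o_len o_ang]
  define N where "N = h a a"
  have N: "N > 0" using go(3) cpos by (simp add: N_def hc)
  have bb: "h b b = N" and ab: "h a b = - N / 2" using go by (simp_all add: N_def hc)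
  have r1: "\<And>u w. h (R *v u) (R *v w) = h u w"
    and r2: "\<And>u. h u (R *v u) = cos (pi / 3) * h u u"
    and r3: "\<And>u. u \<noteq> 0 \<Longrightarrow> sgn (det2 u (R *v u)) = sgn (sin (pi / 3)) * sgn (det2 a b)"
    using rot unfolding is_rotation_def h_def by blast+
  have s60: "sgn (sin (pi / 3)) = 1" by (simp add: sin_60)
  have Ra: "R *v a = a + b"
  proof (rule rot_vec[OF ip])
    show "h a a = N" by (simp add: N_def)
    show "N > 0" by (rule N)
    show "h a b = - N / 2" by (rule ab)
    show "h b b = N" by (rule bb)
    show "det2 a b \<noteq> 0" by (rule indep)
    show "h (R *v a) (R *v a) = N" by (simp add: r1 N_def)
    show "h a (R *v a) = N / 2" by (simp add: r2 cos_60 N_def)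
    show "sgn (det2 a (R *v a)) = sgn (det2 a b)" using r3[OF a0] s60 by simp
  qed
  have b0: "b \<noteq> 0" using indep by (auto simp: det2_def)
  have Rb': "R *v b = b + (- a - b)"
  proof (rule rot_vec[OF ip])
    show "h b b = N" by (rule bb)
    show "N > 0" by (rule N)
    have "h b ((-1) *\<^sub>R a + (-1) *\<^sub>R b) = (-1) * h b a + (-1) * h b b" by (rule ip_expand(2)[OF ip])
    moreover have "(-1) *\<^sub>R a + (-1) *\<^sub>R b = - a - b" by simp
    ultimately show "h b (- a - b) = - N / 2" using ab bb ip_sym[OF ip, of b a] by simp
    show "h (- a - b) (- a - b) = N" using ip_sum_sq(3)[OF ip, of a b] ab bb by (simp add: N_def)
    have db: "det2 b (- a - b) = det2 a b" by (simp add: det2_def algebra_simps)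
    then show "det2 b (- a - b) \<noteq> 0" using indep by simp
    show "h (R *v b) (R *v b) = N" by (simp add: r1 bb)
    show "h b (R *v b) = N / 2" by (simp add: r2 cos_60 bb)
    show "sgn (det2 b (R *v b)) = sgn (det2 b (- a - b))" using r3[OF b0] s60 db by simp
  qed
  then have Rb: "R *v b = - a" by simp
  have dR: "det R = 1" by (rule detR1[OF indep Ra Rb])
  have hR: "\<And>x. h (R *v x) (R *v x) = h x x" by (rule r1)
  have WR: "\<And>Mx. Wdens Phi Psi h a b (Mx ** R) = Wdens Phi Psi h a b Mx"
    by (rule W_inv[OF ip _ bb ab Ra Rb]) (simp add: N_def)
  have le1: "QW Phi Psi h a b (A ** R) \<le> QW Phi Psi h a b A"
    by (rule QW_le[OF dR hR WR])
  obtain S where RS: "R ** S = mat 1" and SR: "S ** R = mat 1"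
    using dR invertible_det_nz[of R] by (auto simp: invertible_def)
  have dS: "det S = 1"
  proof -
    have "det R * det S = 1" using RS by (metis det_mul det_I)
    then show ?thesis using dR by simp
  qed
  have hS: "\<And>x. h (S *v x) (S *v x) = h x x"
  proof -
    fix x
    have "R *v (S *v x) = x" using RS by (simp add: matrix_vector_mul_assoc)
    then show "h (S *v x) (S *v x) = h x x" using hR[of "S *v x"] by simp
  qed
  have WS: "\<And>Mx. Wdens Phi Psi h a b (Mx ** S) = Wdens Phi Psi h a b Mx"
  proof -
    fix Mx :: "real^2^2"
    have "Wdens Phi Psi h a b (Mx ** S) = Wdens Phi Psi h a b ((Mx ** S) ** R)" by (rule WR[symmetric])
    also have "(Mx ** S) ** R = Mx" by (simp add: matrix_mul_assoc[symmetric] SR)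
    finally show "Wdens Phi Psi h a b (Mx ** S) = Wdens Phi Psi h a b Mx" .
  qed
  have "QW Phi Psi h a b ((A ** R) ** S) \<le> QW Phi Psi h a b (A ** R)"
    by (rule QW_le[OF dS hS WS])
  moreover have "(A ** R) ** S = A" by (simp add: matrix_mul_assoc[symmetric] RS)
  ultimately have le2: "QW Phi Psi h a b A \<le> QW Phi Psi h a b (A ** R)" by simp
  show "QW Phi Psi (g p) a b (A ** R) = QW Phi Psi (g p) a b A"
    using le1 le2 unfolding h_def by (rule antisym)
qed

end
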